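(* Let $f$ be a positive, locally integrable real function on $[1,\infty)$ with $f(x)\ll x$ and $\int_1^x\frac{f(t)}{t}\,dt\asymp f(x)$. Let $\vartheta>0$ be such that there exist $x_0,M>0$ with \[ \frac{f(x)}{x^\vartheta}\le M\,\frac{f(y)}{y^\vartheta}\quad\text{for all } y>x\ge x_0. \] Let $c\ge1$ and let $\mathscr{A}$ be the random set associated with $f$ and $c$. Then for every $0<\delta<1$ there is a constant $K$, independent of $n$, such that for all sufficiently large $n$, \[ \mathbb{E}\big(r^{(\delta\text{-small})}_{\mathscr{A},h}(n)\big)\le K\,c^h\,n^{-(1-\delta)\vartheta}\,\frac{f(n)^h}{n}. \]
   Context: Fix an integer $h\ge 2$ and positive integers $b_1,\dots,b_h$, not necessarily distinct, with $\gcd(b_1,\dots,b_h)=1$. Random set: given a function $f:[1,\infty)\to\mathbb{R}_{>0}$ and a constant $c>0$, the random set $\mathscr{A}\subseteq\mathbb{Z}_{\ge0}$ associated with $f$ and $c$ is defined by: $0\in\mathscr{A}$ always, and the events $\{n\in\mathscr{A}\}$ for $n\ge1$ are mutually independent with $\Pr(n\in\mathscr{A})=\min\{cf(n)/n,\,1\}$. For $A\subseteq\mathbb{Z}_{\ge0}$ and $0<\delta<1$, $r^{(\delta\text{-small})}_{A,h}(n)$ is the number of $(k_1,\dots,k_h)\in A^h$ with $b_1k_1+\cdots+b_hk_h=n$ such that $k_j<n^\delta$ for at least one $j$. Asymptotic notation: $X\ll Y$ means $|X|\le CY$ for some constant $C>0$ and all sufficiently large values of the variable. $X\asymp Y$ means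 $X\ll Y$ and $Y\ll X$. *)

theory Defs
  imports "HOL-Probability.Probability" "HOL-Library.Landau_Symbols"
begin

definition r_small :: "(nat \<Rightarrow> nat) \<Rightarrow> nat \<Rightarrow> real \<Rightarrow> nat set \<Rightarrow> nat \<Rightarrow> nat" where
  "r_small b h \<delta> A n = card {k \<in> {..<h} \<rightarrow>\<^sub>E A.
      (\<Sum>j<h. b j * k j) = n \<and> (\<exists>j<h. real (k j) < real n powr \<delta>)}"

end

theory Submission
  imports Defs
begin


definition Pq :: "(nat \<Rightarrow> real) \<Rightarrow> nat set \<Rightarrow> real" where
  "Pq q X = (\<Prod>x\<in>X-{0}. q x)"

definition Tup :: "nat set \<Rightarrow> (nat \<Rightarrow> nat) \<Rightarrow> nat \<Rightarrow> (nat \<Rightarrow> nat) set" where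
  "Tup I b m = {k \<in> I \<rightarrow>\<^sub>E UNIV. (\<Sum>i\<in>I. b i * k i) = m}"

definition TT where "TT q I b m = (\<Sum>k\<in>Tup I b m. Pq q (k ` I))"
definition TF where "TF q j v I b m = (\<Sum>k\<in>{k\<in>Tup I b m. k j = v}. Pq q (k ` I))"

lemma Tup_le: assumes "finite I" "k \<in> Tup I b m" "i \<in> I" shows "b i * k i \<le> m"
proof -
  have "b i * k i \<le> (\<Sum>i\<in>I. b i * k i)" using assms by (intro member_le_sum) auto
  thus ?thesis using assms unfolding Tup_def by auto
qed

lemma Tup_finite: assumes "finite I" "\<forall>i\<in>I. 0 < b i" shows "finite (Tup I b m)"
proof -
  have "Tup I b m \<subseteq> I \<rightarrow>\<^sub>E {..m}"
  proof
    fix k assume k: "k \<in> Tup I b m"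
    have "\<forall>i\<in>I. k i \<le> m"
    proof
      fix i assume i: "i \<in> I"
      have "1 * k i \<le> b i * k i" by (intro mult_le_mono1) (use assms(2) i in auto)
      thus "k i \<le> m" using Tup_le[OF assms(1) k i] by linarith
    qed
    thus "k \<in> I \<rightarrow>\<^sub>E {..m}" using k unfolding Tup_def by (auto simp: PiE_iff)
  qed
  thus ?thesis by (rule finite_subset) (use assms in \<open>auto intro: finite_PiE\<close>)
qed

lemma Pq_nonneg: "\<forall>x. 0 \<le> q x \<Longrightarrow> 0 \<le> Pq q X"
  unfolding Pq_def by (simp add: prod_nonneg)

lemma Pq_insert: assumes "finite X" "v \<notin> X" shows "Pq q (insert v X) = Pq q {v} * Pq q X"
proof (cases "v = 0")
  case True thus ?thesis unfolding Pq_def by (simp add: insert_Diff_if)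
next
  case False
  have "insert v X - {0} = insert v (X - {0})" using False by auto
  thus ?thesis unfolding Pq_def using assms False by simp
qed

lemma Pq_insert_in: "v \<in> X \<Longrightarrow> Pq q (insert v X) = Pq q X"
  by (simp add: insert_absorb)

lemma TT_empty: "TT q {} b m = (if m = 0 then 1 else 0)"
  unfolding TT_def Tup_def Pq_def by auto

lemma TT_split:
  assumes "finite I" "j \<in> I" "\<forall>i\<in>I. 0 < b i"
  shows "TT q I b m = (\<Sum>v\<in>{..m}. TF q j v I b m)"
proof -
  have fin: "finite (Tup I b m)" using Tup_finite assms by blast
  have "(\<Sum>v\<in>{..m}. TF q j v I b m) = (\<Sum>v\<in>{..m}. \<Sum>k\<in>Tup I b m. if k j = v then Pq q (k ` I) else 0)"
    by (simp add: TF_def sum.inter_filter[OF fin])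
  also have "\<dots> = (\<Sum>k\<in>Tup I b m. \<Sum>v\<in>{..m}. if k j = v then Pq q (k ` I) else 0)"
    by (rule sum.swap)
  also have "\<dots> = (\<Sum>k\<in>Tup I b m. Pq q (k ` I))"
  proof (intro sum.cong refl)
    fix k assume k: "k \<in> Tup I b m"
    have "1 * k j \<le> b j * k j" by (intro mult_le_mono1) (use assms in auto)
    hence "k j \<le> m" using Tup_le[OF assms(1) k assms(2)] by linarith
    thus "(\<Sum>v\<in>{..m}. if k j = v then Pq q (k ` I) else 0) = Pq q (k ` I)"
      by (simp add: sum.delta)
  qed
  finally show ?thesis unfolding TT_def by simp
qed

lemma restrict_inj_aux:
  assumes "k1 \<in> I \<rightarrow>\<^sub>E UNIV" "k2 \<in> I \<rightarrow>\<^sub>E UNIV" "j \<in> I" "k1 j = k2 j"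
    "restrict k1 (I - {j}) = restrict k2 (I - {j})"
  shows "k1 = k2"
proof
  fix x
  show "k1 x = k2 x"
  proof (cases "x \<in> I")
    case True
    show ?thesis
    proof (cases "x = j")
      case False
      with True have "restrict k1 (I - {j}) x = restrict k2 (I - {j}) x" using assms(5) by simp
      thus ?thesis using True False by simp
    qed (use assms in auto)
  next
    case False thus ?thesis using assms(1,2) by (auto simp: PiE_def extensional_def)
  qed
qed

lemma TF_rec:
  assumes fin: "finite I" and j: "j \<in> I" and pos: "\<forall>i\<in>I. 0 < b i" and q: "\<forall>x. 0 \<le> q x"
  shows "TF q j v I b m \<le> Pq q {v} * (if b j * v \<le> m then TT q (I-{j}) b (m - b j * v) else 0)
          + (\<Sum>i\<in>I-{j}. TF q j v (I-{i}) (b(j := b j + b i)) m)"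
proof -
  define S where "S = {k\<in>Tup I b m. k j = v}"
  have finS: "finite S" unfolding S_def using Tup_finite[OF fin pos] by simp
  have pqv: "0 \<le> Pq q {v}" using Pq_nonneg q by blast
  have pt: "Pq q (k ` I) \<le> Pq q {v} * Pq q (k ` (I-{j})) + (\<Sum>i\<in>I-{j}. if k i = v then Pq q (k ` I) else 0)"
    if k: "k \<in> S" for k
  proof -
    have kI: "k ` I = insert v (k ` (I-{j}))" using k j unfolding S_def by auto
    have sn: "0 \<le> (\<Sum>i\<in>I-{j}. if k i = v then Pq q (k ` I) else 0)"
      using Pq_nonneg[OF q] by (intro sum_nonneg) auto
    show ?thesis
    proof (cases "v \<in> k ` (I-{j})")
      case True
      then obtain i where i: "i \<in> I-{j}" "k i = v" by auto
      have "Pq q (k ` I) = (if k i = v then Pq q (k ` I) else 0)" using i by simp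
      also have "\<dots> \<le> (\<Sum>i\<in>I-{j}. if k i = v then Pq q (k ` I) else 0)"
        by (rule member_le_sum) (use i fin Pq_nonneg[OF q] in auto)
      finally show ?thesis using pqv Pq_nonneg[OF q] by (smt (verit) mult_nonneg_nonneg)
    next
      case False
      have "Pq q (k ` I) = Pq q {v} * Pq q (k ` (I-{j}))"
        unfolding kI by (rule Pq_insert) (use fin False in auto)
      thus ?thesis using sn by linarith
    qed
  qed
  have partA: "(\<Sum>k\<in>S. Pq q (k ` (I-{j}))) \<le> (if b j * v \<le> m then TT q (I-{j}) b (m - b j * v) else 0)"
  proof (cases "b j * v \<le> m")
    case False
    have "S = {}"
    proof (rule ccontr)
      assume "S \<noteq> {}" then obtain k where k: "k \<in> S" by auto
      hence "b j * k j \<le> m" using Tup_le[OF fin _ j] unfolding S_def by auto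
      thus False using False k unfolding S_def by auto
    qed
    thus ?thesis using False by simp
  next
    case True
    define \<rho> where "\<rho> k = restrict k (I - {j})" for k :: "nat \<Rightarrow> nat"
    have inj: "inj_on \<rho> S"
      by (rule inj_onI, rule restrict_inj_aux[OF _ _ j]) (auto simp: S_def Tup_def \<rho>_def)
    have img: "\<rho> ` S \<subseteq> Tup (I-{j}) b (m - b j * v)"
    proof
      fix x assume "x \<in> \<rho> ` S"
      then obtain k where k: "k \<in> S" and x: "x = \<rho> k" by auto
      have "(\<Sum>i\<in>I. b i * k i) = b j * k j + (\<Sum>i\<in>I-{j}. b i * k i)"
        using fin j by (rule sum.remove)
      moreover have "(\<Sum>i\<in>I-{j}. b i * x i) = (\<Sum>i\<in>I-{j}. b i * k i)"
        unfolding x \<rho>_def by (intro sum.cong) auto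
      ultimately show "x \<in> Tup (I-{j}) b (m - b j * v)"
        using k unfolding x S_def Tup_def \<rho>_def by auto
    qed
    have "(\<Sum>k\<in>S. Pq q (k ` (I-{j}))) = (\<Sum>k\<in>S. Pq q (\<rho> k ` (I-{j})))"
      by (intro sum.cong) (auto simp: \<rho>_def)
    also have "\<dots> = (\<Sum>x\<in>\<rho> ` S. Pq q (x ` (I-{j})))"
      by (rule sum.reindex[OF inj, symmetric, unfolded comp_def])
    also have "\<dots> \<le> TT q (I-{j}) b (m - b j * v)" unfolding TT_def
      by (rule sum_mono2[OF Tup_finite img]) (use fin pos q in \<open>auto intro: Pq_nonneg\<close>)
    finally show ?thesis using True by simp
  qed
  have partB: "(\<Sum>k\<in>S. if k i = v then Pq q (k ` I) else 0) \<le> TF q j v (I-{i}) (b(j := b j + b i)) m"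
    if i: "i \<in> I-{j}" for i
  proof -
    define b' where "b' = b(j := b j + b i)"
    define S' where "S' = {k\<in>S. k i = v}"
    define \<rho> where "\<rho> k = restrict k (I - {i})" for k :: "nat \<Rightarrow> nat"
    have "(\<Sum>k\<in>S. if k i = v then Pq q (k ` I) else 0) = (\<Sum>k\<in>S'. Pq q (k ` I))"
      unfolding S'_def by (simp add: sum.inter_filter[OF finS])
    have inj: "inj_on \<rho> S'"
      by (rule inj_onI, rule restrict_inj_aux[of _ I _ i]) (use i in \<open>auto simp: S'_def S_def Tup_def \<rho>_def\<close>)
    have img: "\<rho> ` S' \<subseteq> {k\<in>Tup (I-{i}) b' m. k j = v}"
    proof
      fix x assume "x \<in> \<rho> ` S'"
      then obtain k where k: "k \<in> S'" and x: "x = \<rho> k" by auto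
      have ki: "k i = v" "k j = v" using k unfolding S'_def S_def by auto
      have fin': "finite (I - {i})" using fin by simp
      have j': "j \<in> I - {i}" using i j by auto
      have "(\<Sum>l\<in>I. b l * k l) = b i * k i + (\<Sum>l\<in>I-{i}. b l * k l)"
        using fin i by (intro sum.remove) auto
      also have "(\<Sum>l\<in>I-{i}. b l * k l) = b j * k j + (\<Sum>l\<in>I-{i}-{j}. b l * k l)"
        using fin' j' by (rule sum.remove)
      finally have e1: "(\<Sum>l\<in>I. b l * k l) = b i * v + b j * v + (\<Sum>l\<in>I-{i}-{j}. b l * k l)"
        using ki by simp
      have "(\<Sum>l\<in>I-{i}. b' l * x l) = b' j * x j + (\<Sum>l\<in>I-{i}-{j}. b' l * x l)"
        using fin' j' by (rule sum.remove)
      also have "(\<Sum>l\<in>I-{i}-{j}. b' l * x l) = (\<Sum>l\<in>I-{i}-{j}. b l * k l)"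
        unfolding x \<rho>_def b'_def by (intro sum.cong) auto
      finally have e2: "(\<Sum>l\<in>I-{i}. b' l * x l) = (b j + b i) * v + (\<Sum>l\<in>I-{i}-{j}. b l * k l)"
        using ki j' unfolding x \<rho>_def b'_def by simp
      show "x \<in> {k\<in>Tup (I-{i}) b' m. k j = v}"
        using k e1 e2 ki j' unfolding S'_def S_def Tup_def x \<rho>_def by (auto simp: algebra_simps)
    qed
    have "(\<Sum>k\<in>S'. Pq q (k ` I)) = (\<Sum>k\<in>S'. Pq q (\<rho> k ` (I-{i})))"
    proof (intro sum.cong refl arg_cong[where f="Pq q"])
      fix k assume k: "k \<in> S'"
      have "k i = k j" using k unfolding S'_def S_def by auto
      have "I = insert i (I - {i})" using i by auto
      hence "k ` I = insert (k i) (k ` (I-{i}))" by (metis image_insert)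
      moreover have "k i \<in> k ` (I-{i})" using \<open>k i = k j\<close> i j by auto
      ultimately have "k ` I = k ` (I - {i})" by (simp add: insert_absorb)
      thus "k ` I = \<rho> k ` (I - {i})" by (auto simp: \<rho>_def)
    qed
    also have "\<dots> = (\<Sum>x\<in>\<rho> ` S'. Pq q (x ` (I-{i})))"
      by (rule sum.reindex[OF inj, symmetric, unfolded comp_def])
    also have "\<dots> \<le> TF q j v (I-{i}) b' m" unfolding TF_def
      by (rule sum_mono2) (use fin pos q i img Tup_finite[of "I-{i}" b' m] in \<open>auto intro: Pq_nonneg simp: b'_def\<close>)
    finally show ?thesis unfolding b'_def
      using \<open>(\<Sum>k\<in>S. if k i = v then Pq q (k ` I) else 0) = (\<Sum>k\<in>S'. Pq q (k ` I))\<close> by simp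
  qed
  have "TF q j v I b m = (\<Sum>k\<in>S. Pq q (k ` I))" unfolding TF_def S_def ..
  also have "\<dots> \<le> (\<Sum>k\<in>S. Pq q {v} * Pq q (k ` (I-{j})) + (\<Sum>i\<in>I-{j}. if k i = v then Pq q (k ` I) else 0))"
    by (rule sum_mono) (rule pt)
  also have "\<dots> = Pq q {v} * (\<Sum>k\<in>S. Pq q (k ` (I-{j}))) + (\<Sum>i\<in>I-{j}. \<Sum>k\<in>S. if k i = v then Pq q (k ` I) else 0)"
    by (simp add: sum.distrib sum_distrib_left sum.swap[of _ S])
  also have "\<dots> \<le> Pq q {v} * (if b j * v \<le> m then TT q (I-{j}) b (m - b j * v) else 0)
          + (\<Sum>i\<in>I-{j}. TF q j v (I-{i}) (b(j := b j + b i)) m)"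
    by (intro add_mono mult_left_mono partA pqv sum_mono partB)
  finally show ?thesis .
qed



lemma sum_upd_merge:
  assumes "finite I" "i \<in> I" "j \<in> I" "i \<noteq> j"
  shows "sum (b(j := b j + b i)) (I - {i}) = (sum b I :: nat)"
proof -
  have f: "finite (I - {i})" using assms by simp
  have j: "j \<in> I - {i}" using assms by auto
  have e1: "sum (b(j := b j + b i)) (I - {i}) = (b(j := b j + b i)) j + sum (b(j := b j + b i)) (I - {i} - {j})"
    by (rule sum.remove[OF f j])
  have e2: "sum (b(j := b j + b i)) (I - {i} - {j}) = sum b (I - {i} - {j})"
    by (intro sum.cong) auto
  have e3: "sum b I = b i + sum b (I - {i})" using assms by (intro sum.remove) auto
  have e4: "sum b (I - {i}) = b j + sum b (I - {i} - {j})" using sum.remove[OF f j] .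
  show ?thesis using e1 e2 e3 e4 by simp
qed

locale anl =
  fixes q :: "nat \<Rightarrow> real" and F :: "nat \<Rightarrow> real" and c :: real and W :: nat
  assumes c1: "c \<ge> 1" and q0: "\<forall>x. 0 \<le> q x"
    and Fmono: "\<And>u m. u \<le> m \<Longrightarrow> F u \<le> F m" and F1: "\<And>m. 1 \<le> F m"
    and qF: "\<And>v. v \<ge> 1 \<Longrightarrow> q v \<le> c * F v / real v"
    and Fsum: "\<And>h. h \<ge> 1 \<Longrightarrow> \<exists>C. \<forall>m. (\<Sum>u\<le>m. F u ^ h / (real u + 1)) \<le> C * F m ^ h"
begin

definition pt where "pt v = Pq q {v}"
definition G where "G h m = (if h = 0 then (if m = 0 then 1 else 0) else F m ^ h / (real m + 1))"
definition SG where "SG h v m = (\<Sum>w\<in>{1..W}. if w * v \<le> m then G h (m - w * v) else 0)"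

lemma pt_eq: "pt v = (if v = 0 then 1 else q v)"
  unfolding pt_def Pq_def by auto

lemma pt_nonneg: "0 \<le> pt v" using q0 by (simp add: pt_eq)

lemma G_nonneg: "0 \<le> G h m"
  using F1[of m] unfolding G_def by (auto intro: divide_nonneg_pos)

lemma G_mono: "G h m \<le> G (Suc h) m"
proof (cases "h = 0")
  case True thus ?thesis using F1[of 0] F1[of m] by (auto simp: G_def)
next
  case False
  have "F m ^ h \<le> F m ^ Suc h" using F1[of m] by (intro power_increasing) auto
  thus ?thesis using False by (auto simp: G_def divide_right_mono)
qed

lemma SG_nonneg: "0 \<le> SG h v m" unfolding SG_def by (intro sum_nonneg) (auto intro: G_nonneg)

lemma SG_mono: "SG h v m \<le> SG (Suc h) v m" unfolding SG_def by (intro sum_mono) (auto intro: G_mono)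

lemma pt_le: "pt v \<le> 2 * c * F v / (real v + 1)"
proof (cases "v = 0")
  case True thus ?thesis using F1[of 0] c1 by (simp add: pt_eq) (smt (verit) mult_le_cancel_left1)
next
  case False
  hence "q v \<le> c * F v / real v" using qF by simp
  also have "\<dots> \<le> 2 * c * F v / (real v + 1)"
    using False c1 F1[of v] by (simp add: field_simps)
  finally show ?thesis using False by (simp add: pt_eq)
qed

lemma L1: "\<exists>Cs\<ge>0. \<forall>m. (\<Sum>v\<le>m. pt v) \<le> Cs * c * F m"
proof -
  obtain C where C: "\<forall>m. (\<Sum>u\<le>m. F u ^ 1 / (real u + 1)) \<le> C * F m ^ 1" using Fsum[of 1] by auto
  have "(\<Sum>v\<le>m. pt v) \<le> (2 * max C 0) * c * F m" for m
  proof -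
    have "(\<Sum>v\<le>m. pt v) \<le> (\<Sum>v\<le>m. 2 * c * (F v / (real v + 1)))"
      by (intro sum_mono) (use pt_le in auto)
    also have "\<dots> = 2 * c * (\<Sum>v\<le>m. F v ^ 1 / (real v + 1))" by (simp add: sum_distrib_left)
    also have "\<dots> \<le> 2 * c * (C * F m)" using C c1 by (intro mult_left_mono) auto
    also have "\<dots> \<le> 2 * c * (max C 0 * F m)" using c1 F1[of m] by (intro mult_left_mono mult_right_mono) auto
    finally show ?thesis by (simp add: algebra_simps)
  qed
  thus ?thesis by (intro exI[of _ "2 * max C 0"]) auto
qed

lemma sumG: "\<exists>C\<ge>0. \<forall>m. (\<Sum>u\<le>m. G h u) \<le> C * F m ^ h"
proof (cases "h = 0")
  case True
  have "(\<Sum>u\<le>m. G h u) = 1" for m using True by (simp add: G_def sum.delta)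
  thus ?thesis using True by (intro exI[of _ 1]) auto
next
  case False
  then obtain C where C: "\<forall>m. (\<Sum>u\<le>m. F u ^ h / (real u + 1)) \<le> C * F m ^ h" using Fsum[of h] by auto
  have "(\<Sum>u\<le>m. G h u) \<le> max C 0 * F m ^ h" for m
  proof -
    have "(\<Sum>u\<le>m. G h u) \<le> C * F m ^ h" using C False by (simp add: G_def)
    also have "\<dots> \<le> max C 0 * F m ^ h" using F1[of m] by (intro mult_right_mono) auto
    finally show ?thesis .
  qed
  thus ?thesis by (intro exI[of _ "max C 0"]) auto
qed

lemma L2: "\<exists>Cc\<ge>0. \<forall>w m. 1 \<le> w \<longrightarrow> w \<le> W \<longrightarrow>
   (\<Sum>v\<le>m. pt v * (if w * v \<le> m then G h (m - w * v) else 0)) \<le> Cc * c * G (Suc h) m"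
proof -
  obtain Cs where Cs: "Cs \<ge> 0" "\<forall>m. (\<Sum>v\<le>m. pt v) \<le> Cs * c * F m" using L1 by auto
  obtain C' where C': "C' \<ge> 0" "\<forall>m. (\<Sum>u\<le>m. G h u) \<le> C' * F m ^ h" using sumG by auto
  have main: "(\<Sum>v\<le>m. pt v * (if w * v \<le> m then G h (m - w * v) else 0)) \<le> (2 * Cs + 2 * W * C') * c * G (Suc h) m"
    if w: "1 \<le> w" "w \<le> W" for w m
  proof -
    define A where "A = 2 * F m ^ h / (real m + 1)"
    define B where "B = 2 * W * c * F m / (real m + 1)"
    define g where "g v = (if w * v \<le> m then G h (m - w * v) else 0)" for v
    have A0: "0 \<le> A" unfolding A_def using F1[of m] by auto
    have B0: "0 \<le> B" unfolding B_def using F1[of m] c1 by auto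
    have g0: "0 \<le> g v" for v unfolding g_def using G_nonneg by auto
    have pw: "pt v * g v \<le> A * pt v + B * g v" for v
    proof (cases "w * v \<le> m")
      case False thus ?thesis using A0 pt_nonneg[of v] by (simp add: g_def)
    next
      case le: True
      show ?thesis
      proof (cases "2 * (w * v) \<le> m")
        case True
        have "G h (m - w * v) \<le> A"
        proof (cases "h = 0")
          case True thus ?thesis using \<open>2 * (w * v) \<le> m\<close> le unfolding A_def G_def by auto
        next
          case False
          have "F (m - w * v) ^ h \<le> F m ^ h" using F1[of "m - w * v"] Fmono[of "m - w * v" m] by (intro power_mono) auto
          moreover have "real m + 1 \<le> 2 * (real (m - w * v) + 1)" 
          proof -
            have "real (2 * (w * v)) \<le> real m" using True by (simp only: of_nat_le_iff)
            thus ?thesis using le by (simp add: of_nat_diff)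
          qed
          ultimately have "2 * F (m - w * v) ^ h / (2 * (real (m - w * v) + 1)) \<le> 2 * F m ^ h / (real m + 1)"
            using F1[of m] F1[of "m - w * v"] by (intro frac_le) auto
          moreover have "2 * F (m - w * v) ^ h / (2 * (real (m - w * v) + 1)) = F (m - w * v) ^ h / (real (m - w * v) + 1)"
            by (rule mult_divide_mult_cancel_left) simp
          ultimately have "F (m - w * v) ^ h / (real (m - w * v) + 1) \<le> 2 * F m ^ h / (real m + 1)" by simp
          thus ?thesis using False unfolding A_def G_def by simp
        qed
        thus ?thesis using g0[of v] pt_nonneg[of v] B0 le
          by (simp add: g_def) (smt (verit) mult_left_mono mult.commute mult_nonneg_nonneg)
      next
        case False
        hence v1: "v \<ge> 1" by (cases v) auto
        have "m + 1 \<le> 2 * w * v" using False by linarith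
        hence "real (m + 1) \<le> real (2 * w * v)" by (simp only: of_nat_le_iff)
        hence "real m + 1 \<le> 2 * real w * real v" by simp
        also have "\<dots> \<le> 2 * real W * real v" using w by (simp add: mult_right_mono)
        finally have mv: "real m + 1 \<le> 2 * real W * real v" .
        have "pt v = q v" using v1 by (simp add: pt_eq)
        also have "\<dots> \<le> c * F v / real v" using qF v1 by simp
        also have "\<dots> \<le> c * F m / real v"
        proof -
          have "1 * v \<le> w * v" by (intro mult_le_mono1) (use w in auto)
          hence "v \<le> m" using le by linarith
          thus ?thesis using Fmono[of v m] c1 by (intro divide_right_mono mult_left_mono) auto
        qed
        also have "\<dots> \<le> B"
        proof -
          have W0: "real W > 0" using w by simp
          have "c * F m / real v = (2 * real W * c * F m) / (2 * real W * real v)"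
            using W0 by simp
          also have "\<dots> \<le> (2 * real W * c * F m) / (real m + 1)"
            using W0 c1 F1[of m] mv by (intro frac_le) auto
          finally show ?thesis unfolding B_def by simp
        qed
        finally have "pt v \<le> B" .
        thus ?thesis using g0[of v] A0 pt_nonneg[of v]
          by (smt (verit) mult_right_mono mult_nonneg_nonneg mult.commute)
      qed
    qed
    have "(\<Sum>v\<le>m. pt v * g v) \<le> (\<Sum>v\<le>m. A * pt v + B * g v)" by (intro sum_mono pw)
    also have "\<dots> = A * (\<Sum>v\<le>m. pt v) + B * (\<Sum>v\<le>m. g v)" by (simp add: sum.distrib sum_distrib_left)
    also have "(\<Sum>v\<le>m. g v) \<le> (\<Sum>u\<le>m. G h u)"
    proof -
      have "(\<Sum>v\<le>m. g v) = (\<Sum>v\<in>{v\<in>{..m}. w * v \<le> m}. G h (m - w * v))"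
        unfolding g_def by (rule sum.inter_filter[symmetric]) simp
      also have "\<dots> = (\<Sum>u\<in>(\<lambda>v. m - w * v) ` {v\<in>{..m}. w * v \<le> m}. G h u)"
        by (rule sum.reindex[symmetric, unfolded comp_def]) (rule inj_onI, use w in \<open>auto, metis diff_diff_cancel mult_cancel1 not_one_le_zero\<close>)
      also have "\<dots> \<le> (\<Sum>u\<le>m. G h u)" by (rule sum_mono2) (auto intro: G_nonneg)
      finally show ?thesis .
    qed
    hence "A * (\<Sum>v\<le>m. pt v) + B * (\<Sum>v\<le>m. g v) \<le> A * (Cs * c * F m) + B * (C' * F m ^ h)"
      using A0 B0 Cs C' by (intro add_mono mult_left_mono) (auto intro: order_trans)
    also have "\<dots> = (2 * F m ^ h * (Cs * c * F m) + 2 * W * c * F m * (C' * F m ^ h)) / (real m + 1)"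
      unfolding A_def B_def by (simp add: add_divide_distrib)
    also have "\<dots> = ((2 * Cs + 2 * W * C') * c * F m ^ Suc h) / (real m + 1)"
      by (rule arg_cong[where f="\<lambda>x. x / (real m + 1)"]) (simp add: power_Suc algebra_simps)
    also have "\<dots> = (2 * Cs + 2 * W * C') * c * (F m ^ Suc h / (real m + 1))" by simp
    also have "\<dots> = (2 * Cs + 2 * W * C') * c * G (Suc h) m" by (simp add: G_def)
    finally show ?thesis unfolding g_def .
  qed
  show ?thesis using Cs C' by (intro exI[of _ "2 * Cs + 2 * W * C'"]) (use main in auto)
qed

end


context anl begin

lemma SG_ge: assumes "w \<in> {1..W}" shows "(if w * v \<le> m then G h (m - w * v) else 0) \<le> SG h v m"
proof -
  have "(\<lambda>w. if w * v \<le> m then G h (m - w * v) else 0) w \<le> (\<Sum>w\<in>{1..W}. (\<lambda>w. if w * v \<le> m then G h (m - w * v) else 0) w)"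
    by (rule member_le_sum[OF assms]) (auto intro: G_nonneg)
  thus ?thesis unfolding SG_def by simp
qed

lemma main_ind:
  "\<exists>C D. 0 \<le> C \<and> 0 \<le> D \<and>
    (\<forall>I b m. finite I \<and> card I = h \<and> (\<forall>i\<in>I. 0 < b i) \<and> sum b I \<le> W \<longrightarrow> TT q I b m \<le> C * c^h * G h m) \<and>
    (\<forall>I b j v m. finite I \<and> card I = Suc h \<and> j \<in> I \<and> (\<forall>i\<in>I. 0 < b i) \<and> sum b I \<le> W \<longrightarrow>
        TF q j v I b m \<le> D * pt v * c^h * SG h v m)"
proof (induction h)
  case 0
  have T0: "TT q I b m \<le> 1 * c^0 * G 0 m" if "finite I" "card I = 0" for I b m
    using that by (simp add: TT_empty G_def)
  have F0: "TF q j v I b m \<le> 1 * pt v * c^0 * SG 0 v m"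
    if P: "finite I" "card I = Suc 0" "j \<in> I" "\<forall>i\<in>I. 0 < b i" "sum b I \<le> W" for I b j v m
  proof -
    obtain x where "I = {x}" using P(2) by (metis One_nat_def card_1_singletonE)
    hence I: "I = {j}" using P(3) by simp
    have "TF q j v I b m \<le> pt v * (if b j * v \<le> m then TT q (I-{j}) b (m - b j * v) else 0)
          + (\<Sum>i\<in>I-{j}. TF q j v (I-{i}) (b(j := b j + b i)) m)"
      unfolding pt_def by (rule TF_rec) (use that q0 in auto)
    also have "\<dots> = pt v * (if b j * v \<le> m then G 0 (m - b j * v) else 0)"
      using I by (simp add: TT_empty G_def)
    also have "\<dots> \<le> pt v * SG 0 v m"
    proof (intro mult_left_mono pt_nonneg)
      have bj: "b j \<in> {1..W}" using that I by auto
      show "(if b j * v \<le> m then G 0 (m - b j * v) else 0) \<le> SG 0 v m"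
        by (rule SG_ge[OF bj])
    qed
    finally show ?thesis by simp
  qed
  show ?case
  proof (intro exI[of _ "1::real"] conjI allI impI)
    fix I b m assume "finite (I::nat set) \<and> card I = 0 \<and> (\<forall>i\<in>I. 0 < b i) \<and> sum b I \<le> W"
    thus "TT q I b m \<le> 1 * c^0 * G 0 m" using T0 by blast
  next
    fix I b j v m assume "finite (I::nat set) \<and> card I = Suc 0 \<and> j \<in> I \<and> (\<forall>i\<in>I. 0 < b i) \<and> sum b I \<le> W"
    thus "TF q j v I b m \<le> 1 * pt v * c^0 * SG 0 v m" using F0 by blast
  qed simp_all
next
  case (Suc h)
  then obtain C D where CD0: "0 \<le> C" "0 \<le> D"
    "\<forall>I b m. finite I \<and> card I = h \<and> (\<forall>i\<in>I. 0 < b i) \<and> sum b I \<le> W \<longrightarrow> TT q I b m \<le> C * c^h * G h m"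
    "\<forall>I b j v m. finite I \<and> card I = Suc h \<and> j \<in> I \<and> (\<forall>i\<in>I. 0 < b i) \<and> sum b I \<le> W \<longrightarrow>
        TF q j v I b m \<le> D * pt v * c^h * SG h v m" by (elim exE conjE) (rule that, assumption+)
  note CD = CD0(1,2) CD0(3)[rule_format] CD0(4)[rule_format]
  obtain Cc where Cc: "Cc \<ge> 0" "\<And>w m. 1 \<le> w \<Longrightarrow> w \<le> W \<Longrightarrow>
   (\<Sum>v\<le>m. pt v * (if w * v \<le> m then G h (m - w * v) else 0)) \<le> Cc * c * G (Suc h) m"
    using L2[of h] by (elim exE conjE) (rule that, assumption, blast)
  define C' where "C' = D * W * Cc"
  have C'0: "0 \<le> C'" unfolding C'_def using CD Cc by auto
  have T1: "TT q I b m \<le> C' * c^Suc h * G (Suc h) m"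
    if I: "finite I" "card I = Suc h" "\<forall>i\<in>I. 0 < b i" "sum b I \<le> W" for I b m
  proof -
    obtain j where j: "j \<in> I" using I by (metis card_eq_SucD insertI1)
    have "TT q I b m = (\<Sum>v\<le>m. TF q j v I b m)" using TT_split[OF I(1) j I(3)] by simp
    also have "\<dots> \<le> (\<Sum>v\<le>m. D * pt v * c^h * SG h v m)"
      by (intro sum_mono CD(4)) (use I j in auto)
    also have "\<dots> = D * c^h * (\<Sum>w\<in>{1..W}. \<Sum>v\<le>m. pt v * (if w * v \<le> m then G h (m - w * v) else 0))"
      unfolding SG_def by (simp add: sum_distrib_left sum.swap[of _ "{..m}"] algebra_simps)
    also have "\<dots> \<le> D * c^h * (\<Sum>w\<in>{1..W}. Cc * c * G (Suc h) m)"
      using CD c1 by (intro mult_left_mono sum_mono Cc(2)) auto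
    also have "\<dots> = C' * c^Suc h * G (Suc h) m" unfolding C'_def by (simp add: algebra_simps)
    finally show ?thesis .
  qed
  define D' where "D' = C' + Suc h * D"
  have F1': "TF q j v I b m \<le> D' * pt v * c^Suc h * SG (Suc h) v m"
    if I: "finite I" "card I = Suc (Suc h)" "j \<in> I" "\<forall>i\<in>I. 0 < b i" "sum b I \<le> W" for I b j v m
  proof -
    have cp: "c^h \<le> c^Suc h" using c1 by (intro power_increasing) auto
    have c0: "0 \<le> c^h" using c1 by simp
    have "TF q j v I b m \<le> pt v * (if b j * v \<le> m then TT q (I-{j}) b (m - b j * v) else 0)
          + (\<Sum>i\<in>I-{j}. TF q j v (I-{i}) (b(j := b j + b i)) m)"
      unfolding pt_def by (rule TF_rec) (use I q0 in auto)
    also have "pt v * (if b j * v \<le> m then TT q (I-{j}) b (m - b j * v) else 0) \<le> pt v * (C' * c^Suc h * SG (Suc h) v m)"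
    proof (intro mult_left_mono pt_nonneg)
      have sI: "sum b (I - {j}) \<le> W" using I sum_mono2[of I "I-{j}" b] by auto
      have bj: "b j \<in> {1..W}" using I member_le_sum[of j I b] by (auto simp: Suc_le_eq)
      have "(if b j * v \<le> m then TT q (I-{j}) b (m - b j * v) else 0) \<le>
            C' * c^Suc h * (if b j * v \<le> m then G (Suc h) (m - b j * v) else 0)"
        using T1[of "I-{j}" b] I sI by auto
      also have "\<dots> \<le> C' * c^Suc h * SG (Suc h) v m"
        using C'0 c1 by (intro mult_left_mono SG_ge[OF bj]) auto
      finally show "(if b j * v \<le> m then TT q (I-{j}) b (m - b j * v) else 0) \<le> C' * c^Suc h * SG (Suc h) v m" .
    qed
    also have "(\<Sum>i\<in>I-{j}. TF q j v (I-{i}) (b(j := b j + b i)) m) \<le> (\<Sum>i\<in>I-{j}. D * pt v * c^Suc h * SG (Suc h) v m)"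
    proof (intro sum_mono)
      fix i assume i: "i \<in> I - {j}"
      have "TF q j v (I-{i}) (b(j := b j + b i)) m \<le> D * pt v * c^h * SG h v m"
      proof -
        have sm: "sum (b(j := b j + b i)) (I - {i}) \<le> W"
          using sum_upd_merge[of I i j b] I i by simp
        show ?thesis using I i sm by (intro CD(4)) auto
      qed
      also have "\<dots> \<le> D * pt v * c^Suc h * SG (Suc h) v m"
        using CD pt_nonneg[of v] SG_nonneg[of h v m] cp c0 SG_mono[of h v m]
        by (intro mult_mono mult_left_mono) (auto intro: mult_nonneg_nonneg)
      finally show "TF q j v (I-{i}) (b(j := b j + b i)) m \<le> D * pt v * c^Suc h * SG (Suc h) v m" .
    qed
    also have "(\<Sum>i\<in>I-{j}. D * pt v * c^Suc h * SG (Suc h) v m) = Suc h * (D * pt v * c^Suc h * SG (Suc h) v m)"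
      using I by simp
    finally show ?thesis unfolding D'_def by (simp add: algebra_simps)
  qed
  have D'0: "0 \<le> D'" unfolding D'_def using C'0 CD by simp
  show ?case
  proof (rule exI[of _ C'], rule exI[of _ D'], intro conjI allI impI)
    fix I b m assume "finite (I::nat set) \<and> card I = Suc h \<and> (\<forall>i\<in>I. 0 < b i) \<and> sum b I \<le> W"
    thus "TT q I b m \<le> C' * c^Suc h * G (Suc h) m" using T1 by blast
  next
    fix I b j v m assume "finite (I::nat set) \<and> card I = Suc (Suc h) \<and> j \<in> I \<and> (\<forall>i\<in>I. 0 < b i) \<and> sum b I \<le> W"
    thus "TF q j v I b m \<le> D' * pt v * c^Suc h * SG (Suc h) v m" using F1' by blast
  qed (use C'0 D'0 in simp_all)
qed

end


lemma powr_step: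
  fixes s x :: real
  assumes s: "0 < s" "s < 1" and x: "0 \<le> x"
  shows "s * (x + 1) powr (s - 1) \<le> (x + 1) powr s - x powr s"
proof (cases "x = 0")
  case True thus ?thesis using s by simp
next
  case False
  hence xp: "x > 0" using x by simp
  obtain z where z: "x < z" "z < x + 1" "(x + 1) powr s - x powr s = ((x + 1) - x) * (s * z powr (s - 1))"
  proof -
    have "\<exists>z. x < z \<and> z < x + 1 \<and> (x + 1) powr s - x powr s = ((x + 1) - x) * (s * z powr (s - 1))"
      by (rule MVT2[of x "x + 1" "\<lambda>y. y powr s" "\<lambda>y. s * y powr (s - 1)"])
         (use xp in \<open>auto intro!: has_real_derivative_powr\<close>)
    thus ?thesis using that by blast
  qed
  have "(x + 1) powr (s - 1) \<le> z powr (s - 1)"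
    using z xp s by (intro powr_mono2') auto
  thus ?thesis using z s by simp
qed

lemma powr_sum_bound:
  fixes s :: real assumes s: "0 < s"
  shows "\<exists>C. \<forall>m::nat. (\<Sum>u\<le>m. (real u + 1) powr (s - 1)) \<le> C * (real m + 1) powr s"
proof (cases "s \<ge> 1")
  case True
  have "(\<Sum>u\<le>m. (real u + 1) powr (s - 1)) \<le> 1 * (real m + 1) powr s" for m
  proof -
    have "(\<Sum>u\<le>m. (real u + 1) powr (s - 1)) \<le> (\<Sum>u\<le>m. (real m + 1) powr (s - 1))"
      using True by (intro sum_mono powr_mono2) auto
    also have "\<dots> = (real m + 1) * (real m + 1) powr (s - 1)" by simp
    also have "\<dots> = (real m + 1) powr s"
      by (simp add: powr_diff)
    finally show ?thesis by simp
  qed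
  thus ?thesis by blast
next
  case False
  have "(\<Sum>u\<le>m. (real u + 1) powr (s - 1)) \<le> (1 / s) * (real m + 1) powr s" for m
  proof -
    have "(\<Sum>u\<le>m. (real u + 1) powr (s - 1)) \<le> (\<Sum>u<Suc m. (1/s) * ((real (Suc u)) powr s - (real u) powr s))"
      unfolding lessThan_Suc_atMost
    proof (intro sum_mono)
      fix u assume "u \<in> {..m}"
      have "s * (real u + 1) powr (s - 1) \<le> (real u + 1) powr s - real u powr s"
        using powr_step[of s "real u"] s False by auto
      thus "(real u + 1) powr (s - 1) \<le> 1 / s * (real (Suc u) powr s - real u powr s)"
        using s by (simp add: field_simps add.commute)
    qed
    also have "\<dots> = (1/s) * (\<Sum>u<Suc m. (real (Suc u)) powr s - (real u) powr s)"
      by (rule sum_distrib_left[symmetric])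
    also have "(\<Sum>u<Suc m. (real (Suc u)) powr s - (real u) powr s) = (real m + 1) powr s"
      by (subst sum_lessThan_telescope[where f = "\<lambda>u. real u powr s"]) (simp add: add.commute)
    finally show ?thesis .
  qed
  thus ?thesis by blast
qed



definition h0 :: "(real \<Rightarrow> real) \<Rightarrow> real \<Rightarrow> nat \<Rightarrow> real" where
  "h0 f \<theta> u = (if u = 0 then 1 else f (real u) / (real u + 1) powr \<theta>)"
definition HH where "HH f \<theta> m = Max (h0 f \<theta> ` {..m})"
definition FF where "FF f \<theta> m = (real m + 1) powr \<theta> * HH f \<theta> m"

lemma HH_ge: "u \<le> m \<Longrightarrow> h0 f \<theta> u \<le> HH f \<theta> m"
  unfolding HH_def by (rule Max_ge) auto

lemma HH_1: "1 \<le> HH f \<theta> m"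
  using HH_ge[of 0 m f \<theta>] by (simp add: h0_def)

lemma HH_mono: "u \<le> m \<Longrightarrow> HH f \<theta> u \<le> HH f \<theta> m"
  unfolding HH_def by (rule Max_mono) auto

lemma FF_mono: assumes "0 \<le> \<theta>" "u \<le> m" shows "FF f \<theta> u \<le> FF f \<theta> m"
  unfolding FF_def using assms HH_mono[OF assms(2), of f \<theta>] HH_1[of f \<theta> u]
  by (intro mult_mono powr_mono2) auto

lemma FF_1: assumes "0 \<le> \<theta>" shows "1 \<le> FF f \<theta> m"
proof -
  have "1 \<le> (real m + 1) powr \<theta>" using assms by (intro ge_one_powr_ge_zero) auto
  thus ?thesis unfolding FF_def using HH_1[of f \<theta> m]
    by (metis mult_mono' mult_1 zero_le_one)
qed

lemma f_le_FF: assumes "v \<ge> 1" shows "f (real v) \<le> FF f \<theta> v"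
proof -
  have "f (real v) = (real v + 1) powr \<theta> * h0 f \<theta> v" using assms by (simp add: h0_def)
  also have "\<dots> \<le> (real v + 1) powr \<theta> * HH f \<theta> v" by (intro mult_left_mono HH_ge) auto
  finally show ?thesis unfolding FF_def .
qed

lemma FF_pow: assumes "0 < x" shows "(x powr \<theta>) ^ h = x powr (\<theta> * real h)"
  using assms by (simp add: powr_realpow[symmetric] powr_powr)

lemma FF_sum: assumes th: "0 < \<theta>" and h: "h \<ge> 1"
  shows "\<exists>C. \<forall>m. (\<Sum>u\<le>m. FF f \<theta> u ^ h / (real u + 1)) \<le> C * FF f \<theta> m ^ h"
proof -
  have sp: "0 < \<theta> * real h" using th h by simp
  obtain C where C: "\<forall>m::nat. (\<Sum>u\<le>m. (real u + 1) powr (\<theta> * real h - 1)) \<le> C * (real m + 1) powr (\<theta> * real h)"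
    using powr_sum_bound[OF sp] by blast
  have "(\<Sum>u\<le>m. FF f \<theta> u ^ h / (real u + 1)) \<le> C * FF f \<theta> m ^ h" for m
  proof -
    have "(\<Sum>u\<le>m. FF f \<theta> u ^ h / (real u + 1)) \<le> (\<Sum>u\<le>m. HH f \<theta> m ^ h * (real u + 1) powr (\<theta> * real h - 1))"
    proof (intro sum_mono)
      fix u assume u: "u \<in> {..m}"
      have "FF f \<theta> u ^ h = (real u + 1) powr (\<theta> * real h) * HH f \<theta> u ^ h"
        unfolding FF_def by (simp add: power_mult_distrib FF_pow)
      also have "\<dots> \<le> (real u + 1) powr (\<theta> * real h) * HH f \<theta> m ^ h"
        using HH_mono[of u m f \<theta>] HH_1[of f \<theta> u] u by (intro mult_left_mono power_mono) auto
      finally have "FF f \<theta> u ^ h / (real u + 1) \<le> (real u + 1) powr (\<theta> * real h) * HH f \<theta> m ^ h / (real u + 1)"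
        by (intro divide_right_mono) auto
      also have "\<dots> = HH f \<theta> m ^ h * (real u + 1) powr (\<theta> * real h - 1)"
        by (simp add: powr_diff)
      finally show "FF f \<theta> u ^ h / (real u + 1) \<le> HH f \<theta> m ^ h * (real u + 1) powr (\<theta> * real h - 1)" .
    qed
    also have "\<dots> = HH f \<theta> m ^ h * (\<Sum>u\<le>m. (real u + 1) powr (\<theta> * real h - 1))"
      by (rule sum_distrib_left[symmetric])
    also have "\<dots> \<le> HH f \<theta> m ^ h * (C * (real m + 1) powr (\<theta> * real h))"
      using C HH_1[of f \<theta> m] by (intro mult_left_mono) auto
    also have "\<dots> = C * FF f \<theta> m ^ h"
      unfolding FF_def by (simp add: power_mult_distrib FF_pow)
    finally show ?thesis .
  qed
  thus ?thesis by blast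
qed

lemma FF_le_f:
  assumes th: "0 < \<theta>" and fpos: "\<forall>x\<ge>1. f x > 0"
    and tc: "\<exists>x0>0. \<exists>K0>0. \<forall>x y. 1 \<le> x \<longrightarrow> x0 \<le> x \<longrightarrow> x < y \<longrightarrow>
                        f x / x powr \<theta> \<le> K0 * (f y / y powr \<theta>)"
  shows "\<exists>CF n1. \<forall>n\<ge>n1. FF f \<theta> n \<le> CF * f (real n)"
proof -
  obtain x0 K0 where x0: "x0 > 0" and K0: "K0 > 0" and
    tc': "\<And>x y. 1 \<le> x \<Longrightarrow> x0 \<le> x \<Longrightarrow> x < y \<Longrightarrow> f x / x powr \<theta> \<le> K0 * (f y / y powr \<theta>)"
    using tc by blast
  define x1 where "x1 = nat \<lceil>max x0 1\<rceil>"
  have x1: "real x1 \<ge> x0" "real x1 \<ge> 1" "x1 \<ge> 1" unfolding x1_def by linarith+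
  define D0 where "D0 = HH f \<theta> x1"
  define c1 where "c1 = f (real x1) / (real x1) powr \<theta> / (K0 * 2 powr \<theta> * 2 powr \<theta>)"
  have fx1: "f (real x1) > 0" using fpos x1 by auto
  have c1: "c1 > 0" unfolding c1_def using fx1 K0 x1 by (auto intro!: divide_pos_pos mult_pos_pos)
  define CH where "CH = max (D0 / c1) (max (K0 * 2 powr \<theta>) 1)"
  have key: "h0 f \<theta> u \<le> K0 * 2 powr \<theta> * h0 f \<theta> n" if u: "x1 \<le> u" "u < n" for u n
  proof -
    have n1: "real n \<ge> 1" using u x1 by linarith
    have u1: "real u \<ge> 1" using u x1 by linarith
    have fn: "f (real n) > 0" using fpos n1 by auto
    have fu: "f (real u) > 0" using fpos u1 by auto
    have "h0 f \<theta> u = f (real u) / (real u + 1) powr \<theta>" using u1 by (simp add: h0_def)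
    also have "\<dots> \<le> f (real u) / (real u) powr \<theta>"
      using fu u1 th by (intro divide_left_mono powr_mono2) auto
    also have "\<dots> \<le> K0 * (f (real n) / (real n) powr \<theta>)"
      using u x1 by (intro tc') auto
    also have "f (real n) / (real n) powr \<theta> \<le> 2 powr \<theta> * (f (real n) / (real n + 1) powr \<theta>)"
    proof -
      have "(real n + 1) powr \<theta> \<le> (2 * real n) powr \<theta>" using n1 th by (intro powr_mono2) auto
      also have "\<dots> = 2 powr \<theta> * real n powr \<theta>" by (simp add: powr_mult)
      finally have le: "(real n + 1) powr \<theta> \<le> 2 powr \<theta> * real n powr \<theta>" .
      have "f (real n) / (real n) powr \<theta> = 2 powr \<theta> * f (real n) / (2 powr \<theta> * real n powr \<theta>)" by simp
      also have "\<dots> \<le> 2 powr \<theta> * f (real n) / (real n + 1) powr \<theta>"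
        using le fn n1 by (intro divide_left_mono) auto
      finally show ?thesis by simp
    qed
    hence "K0 * (f (real n) / (real n) powr \<theta>) \<le> K0 * (2 powr \<theta> * (f (real n) / (real n + 1) powr \<theta>))"
      using K0 by (intro mult_left_mono) auto
    also have "\<dots> = K0 * 2 powr \<theta> * h0 f \<theta> n" using n1 by (simp add: h0_def)
    finally show ?thesis .
  qed
  have "FF f \<theta> n \<le> CH * f (real n)" if n: "n \<ge> Suc x1" for n
  proof -
    have n1: "real n \<ge> 1" using n by simp
    have lb: "c1 \<le> h0 f \<theta> n"
    proof -
      have "h0 f \<theta> x1 \<le> K0 * 2 powr \<theta> * h0 f \<theta> n" using key[of x1 n] n by simp
      moreover have "h0 f \<theta> x1 = f (real x1) / (real x1 + 1) powr \<theta>" using x1 by (simp add: h0_def)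
      moreover have "f (real x1) / (real x1) powr \<theta> \<le> 2 powr \<theta> * (f (real x1) / (real x1 + 1) powr \<theta>)"
      proof -
        have "(real x1 + 1) powr \<theta> \<le> (2 * real x1) powr \<theta>" using x1 th by (intro powr_mono2) auto
        also have "\<dots> = 2 powr \<theta> * real x1 powr \<theta>" by (simp add: powr_mult)
        finally have le: "(real x1 + 1) powr \<theta> \<le> 2 powr \<theta> * real x1 powr \<theta>" .
        have "f (real x1) / (real x1) powr \<theta> = 2 powr \<theta> * f (real x1) / (2 powr \<theta> * real x1 powr \<theta>)" by simp
        also have "\<dots> \<le> 2 powr \<theta> * f (real x1) / (real x1 + 1) powr \<theta>"
          using le fx1 x1 by (intro divide_left_mono) auto
        finally show ?thesis by simp
      qed
      ultimately have "f (real x1) / (real x1) powr \<theta> \<le> 2 powr \<theta> * (K0 * 2 powr \<theta> * h0 f \<theta> n)"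
        by (smt (verit) mult_left_mono powr_ge_zero)
      hence "f (real x1) / (real x1) powr \<theta> \<le> h0 f \<theta> n * (K0 * 2 powr \<theta> * 2 powr \<theta>)"
        by (simp add: algebra_simps)
      thus ?thesis unfolding c1_def using K0 by (subst pos_divide_le_eq) auto
    qed
    have hn: "0 < h0 f \<theta> n" using lb c1 by linarith
    have "HH f \<theta> n \<le> CH * h0 f \<theta> n" unfolding HH_def
    proof (rule Max.boundedI, simp, simp)
      fix y assume "y \<in> h0 f \<theta> ` {..n}"
      then obtain u where u: "u \<le> n" "y = h0 f \<theta> u" by auto
      show "y \<le> CH * h0 f \<theta> n"
      proof (cases "u < x1")
        case True
        have "y \<le> D0" unfolding D0_def u(2) using True by (intro HH_ge) simp
        also have "D0 = (D0 / c1) * c1" using c1 by simp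
        also have "\<dots> \<le> CH * h0 f \<theta> n"
          using lb c1 HH_1[of f \<theta> x1] unfolding CH_def D0_def
          by (intro mult_mono) auto
        finally show ?thesis .
      next
        case False
        show ?thesis
        proof (cases "u = n")
          case True
          thus ?thesis using u hn unfolding CH_def by (simp add: mult_le_cancel_right1)
        next
          case False
          hence "y \<le> K0 * 2 powr \<theta> * h0 f \<theta> n" using u key[of u n] \<open>\<not> u < x1\<close> by simp
          also have "\<dots> \<le> CH * h0 f \<theta> n" unfolding CH_def using hn by (intro mult_right_mono) auto
          finally show ?thesis .
        qed
      qed
    qed
    hence "FF f \<theta> n \<le> (real n + 1) powr \<theta> * (CH * h0 f \<theta> n)"
      unfolding FF_def by (intro mult_left_mono) auto
    also have "\<dots> = CH * f (real n)" using n1 by (simp add: h0_def)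
    finally show ?thesis .
  qed
  thus ?thesis by blast
qed



lemma prob_part:
  fixes M :: "'a measure" and A :: "'a \<Rightarrow> nat set" and q :: "nat \<Rightarrow> real"
  assumes M: "prob_space M"
    and A_zero: "\<forall>\<omega>\<in>space M. 0 \<in> A \<omega>"
    and A_indep: "prob_space.indep_events M (\<lambda>n. {\<omega> \<in> space M. n \<in> A \<omega>}) {1..}"
    and A_prob: "\<forall>n\<ge>1. measure M {\<omega> \<in> space M. n \<in> A \<omega>} = q n"
    and X: "finite X"
  shows "{\<omega>\<in>space M. X \<subseteq> A \<omega>} \<in> sets M \<and> measure M {\<omega>\<in>space M. X \<subseteq> A \<omega>} = Pq q X"
proof -
  interpret P: prob_space M by (rule M)
  define Y where "Y = X - {0}"
  have eq: "{\<omega>\<in>space M. X \<subseteq> A \<omega>} = {\<omega>\<in>space M. Y \<subseteq> A \<omega>}"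
    unfolding Y_def using A_zero by blast
  have ind: "(\<lambda>n. {\<omega> \<in> space M. n \<in> A \<omega>}) ` {1..} \<subseteq> P.events"
    "\<And>J. J \<subseteq> {1..} \<Longrightarrow> J \<noteq> {} \<Longrightarrow> finite J \<Longrightarrow>
       P.prob (\<Inter>j\<in>J. {\<omega> \<in> space M. j \<in> A \<omega>}) = (\<Prod>j\<in>J. P.prob {\<omega> \<in> space M. j \<in> A \<omega>})"
    using A_indep unfolding P.indep_events_def by auto
  have Y1: "Y \<subseteq> {1..}" unfolding Y_def by auto
  have finY: "finite Y" unfolding Y_def using X by simp
  show ?thesis
  proof (cases "Y = {}")
    case True
    hence "{\<omega>\<in>space M. X \<subseteq> A \<omega>} = space M" using eq by simp
    moreover have "Pq q X = 1" unfolding Pq_def using True unfolding Y_def by (metis prod.empty)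
    ultimately show ?thesis by (simp add: P.prob_space)
  next
    case False
    have eq2: "{\<omega>\<in>space M. Y \<subseteq> A \<omega>} = (\<Inter>j\<in>Y. {\<omega> \<in> space M. j \<in> A \<omega>})"
      using False by auto
    have "(\<Inter>j\<in>Y. {\<omega> \<in> space M. j \<in> A \<omega>}) \<in> sets M"
      using ind(1) Y1 False finY by (intro sets.finite_INT) auto
    moreover have "P.prob (\<Inter>j\<in>Y. {\<omega> \<in> space M. j \<in> A \<omega>}) = Pq q X"
      using ind(2)[OF Y1 False finY] A_prob Y1 unfolding Pq_def Y_def[symmetric]
      by (auto intro!: prod.cong)
    ultimately show ?thesis using eq eq2 by simp
  qed
qed

lemma expect_part:
  fixes M :: "'a measure" and A :: "'a \<Rightarrow> nat set" and q :: "nat \<Rightarrow> real"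
  assumes M: "prob_space M"
    and A_zero: "\<forall>\<omega>\<in>space M. 0 \<in> A \<omega>"
    and A_indep: "prob_space.indep_events M (\<lambda>n. {\<omega> \<in> space M. n \<in> A \<omega>}) {1..}"
    and A_prob: "\<forall>n\<ge>1. measure M {\<omega> \<in> space M. n \<in> A \<omega>} = q n"
    and bpos: "\<forall>j<h. b j > 0"
  shows "prob_space.expectation M (\<lambda>\<omega>. real (r_small b h \<delta> (A \<omega>) n)) =
     (\<Sum>k\<in>{k \<in> {..<h} \<rightarrow>\<^sub>E UNIV. (\<Sum>j<h. b j * k j) = n \<and> (\<exists>j<h. real (k j) < real n powr \<delta>)}. Pq q (k ` {..<h}))"
proof -
  interpret P: prob_space M by (rule M)
  define S where "S = {k \<in> {..<h} \<rightarrow>\<^sub>E UNIV. (\<Sum>j<h. b j * k j) = n \<and> (\<exists>j<h. real (k j) < real n powr \<delta>)}"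
  define E where "E k = {\<omega>\<in>space M. k ` {..<h} \<subseteq> A \<omega>}" for k :: "nat \<Rightarrow> nat"
  have finS: "finite S"
  proof (rule finite_subset)
    show "S \<subseteq> Tup {..<h} b n" unfolding S_def Tup_def by auto
    show "finite (Tup {..<h} b n)" using bpos by (intro Tup_finite) auto
  qed
  have PE: "E k \<in> sets M \<and> measure M (E k) = Pq q (k ` {..<h})" for k
    unfolding E_def by (rule prob_part[OF M A_zero A_indep A_prob]) simp
  have pt: "real (r_small b h \<delta> (A \<omega>) n) = (\<Sum>k\<in>S. indicator (E k) \<omega>)" if w: "\<omega> \<in> space M" for \<omega>
  proof -
    have "{k \<in> {..<h} \<rightarrow>\<^sub>E A \<omega>. (\<Sum>j<h. b j * k j) = n \<and> (\<exists>j<h. real (k j) < real n powr \<delta>)}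
          = {k\<in>S. k ` {..<h} \<subseteq> A \<omega>}" unfolding S_def by (auto simp: PiE_iff)
    hence "real (r_small b h \<delta> (A \<omega>) n) = real (card {k\<in>S. k ` {..<h} \<subseteq> A \<omega>})"
      unfolding r_small_def by simp
    also have "\<dots> = (\<Sum>k\<in>{k\<in>S. k ` {..<h} \<subseteq> A \<omega>}. 1)" by simp
    also have "\<dots> = (\<Sum>k\<in>S. if k ` {..<h} \<subseteq> A \<omega> then 1 else 0)"
      by (rule sum.inter_filter[OF finS])
    also have "\<dots> = (\<Sum>k\<in>S. indicator (E k) \<omega>)"
      using w by (intro sum.cong) (auto simp: E_def indicator_def)
    finally show ?thesis .
  qed
  have "P.expectation (\<lambda>\<omega>. real (r_small b h \<delta> (A \<omega>) n)) = P.expectation (\<lambda>\<omega>. \<Sum>k\<in>S. indicator (E k) \<omega>)"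
    by (rule Bochner_Integration.integral_cong) (auto simp: pt)
  also have "\<dots> = (\<Sum>k\<in>S. P.expectation (indicator (E k)))"
    by (rule Bochner_Integration.integral_sum) (use PE in \<open>auto intro!: integrable_real_indicator simp: less_top[symmetric]\<close>)
  also have "\<dots> = (\<Sum>k\<in>S. Pq q (k ` {..<h}))"
  proof (intro sum.cong refl)
    fix k
    have "E k \<subseteq> space M" unfolding E_def by auto
    thus "P.expectation (indicator (E k)) = Pq q (k ` {..<h})" using PE[of k]
      by (simp add: Int_absorb2)
  qed
  finally show ?thesis unfolding S_def .
qed



lemma small_split:
  assumes bpos: "\<forall>j<h. b j > 0" and q0: "\<forall>x. 0 \<le> q x"
  shows "(\<Sum>k\<in>{k \<in> {..<h} \<rightarrow>\<^sub>E UNIV. (\<Sum>j<h. b j * k j) = n \<and> (\<exists>j<h. real (k j) < real n powr \<delta>)}. Pq q (k ` {..<h}))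
     \<le> (\<Sum>j<h. \<Sum>v\<in>{v. v \<le> n \<and> real v < real n powr \<delta>}. TF q j v {..<h} b n)"
proof -
  define S where "S = {k \<in> {..<h} \<rightarrow>\<^sub>E UNIV. (\<Sum>j<h. b j * k j) = n \<and> (\<exists>j<h. real (k j) < real n powr \<delta>)}"
  define V where "V = {v. v \<le> n \<and> real v < real n powr \<delta>}"
  define g where "g k = (\<Sum>j<h. \<Sum>v\<in>V. if k j = v then Pq q (k ` {..<h}) else 0)" for k
  have finV: "finite V" unfolding V_def by auto
  have finT: "finite (Tup {..<h} b n)" using bpos by (intro Tup_finite) auto
  have ST: "S \<subseteq> Tup {..<h} b n" unfolding S_def Tup_def by auto
  have g0: "0 \<le> g k" for k unfolding g_def using Pq_nonneg[OF q0] by (intro sum_nonneg) auto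
  have pk: "Pq q (k ` {..<h}) \<le> g k" if k: "k \<in> S" for k
  proof -
    obtain j where j: "j < h" "real (k j) < real n powr \<delta>" using k unfolding S_def by auto
    have "b j * k j \<le> n" using Tup_le[of "{..<h}" k b n j] ST k j by auto
    moreover have "1 * k j \<le> b j * k j" by (intro mult_le_mono1) (use bpos j in auto)
    hence "k j \<le> b j * k j" by (simp only: mult_1)
    ultimately have kjV: "k j \<in> V" unfolding V_def using j by (simp, linarith)
    have "Pq q (k ` {..<h}) = (\<lambda>v. if k j = v then Pq q (k ` {..<h}) else 0) (k j)" by simp
    also have "\<dots> \<le> (\<Sum>v\<in>V. if k j = v then Pq q (k ` {..<h}) else 0)"
      by (rule member_le_sum[OF kjV]) (use finV Pq_nonneg[OF q0] in auto)
    also have "\<dots> \<le> g k"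
    proof -
      have "(\<lambda>j. \<Sum>v\<in>V. if k j = v then Pq q (k ` {..<h}) else 0) j \<le>
          (\<Sum>j'<h. (\<lambda>j. \<Sum>v\<in>V. if k j = v then Pq q (k ` {..<h}) else 0) j')"
        by (rule member_le_sum) (use j Pq_nonneg[OF q0] in \<open>auto intro!: sum_nonneg\<close>)
      thus ?thesis unfolding g_def by simp
    qed
    finally show ?thesis .
  qed
  have "(\<Sum>k\<in>S. Pq q (k ` {..<h})) \<le> (\<Sum>k\<in>S. g k)" by (intro sum_mono pk)
  also have "\<dots> \<le> (\<Sum>k\<in>Tup {..<h} b n. g k)" by (rule sum_mono2[OF finT ST g0])
  also have "\<dots> = (\<Sum>j<h. \<Sum>v\<in>V. \<Sum>k\<in>Tup {..<h} b n. if k j = v then Pq q (k ` {..<h}) else 0)"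
    unfolding g_def by (simp add: sum.swap[of _ "Tup {..<h} b n"])
  also have "\<dots> = (\<Sum>j<h. \<Sum>v\<in>V. TF q j v {..<h} b n)"
    unfolding TF_def by (simp add: sum.inter_filter[OF finT])
  finally show ?thesis unfolding S_def V_def .
qed



lemma eventually_Wpow:
  fixes \<delta> :: real assumes d: "0 < \<delta>" "\<delta> < 1"
  shows "\<exists>N1. \<forall>n\<ge>N1. real W * real n powr \<delta> \<le> real n / 2"
proof -
  define N1 where "N1 = nat \<lceil>(2 * real W + 1) powr (1 / (1 - \<delta>))\<rceil>"
  have "real W * real n powr \<delta> \<le> real n / 2" if n: "n \<ge> N1" for n
  proof -
    have base: "(2 * real W + 1) powr (1 / (1 - \<delta>)) \<le> real n"
      using n unfolding N1_def by linarith
    have bp: "0 < (2 * real W + 1) powr (1 / (1 - \<delta>))" by simp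
    hence npos: "real n > 0" using base by linarith
    have "2 * real W + 1 = ((2 * real W + 1) powr (1 / (1 - \<delta>))) powr (1 - \<delta>)"
      using d by (simp add: powr_powr)
    also have "\<dots> \<le> real n powr (1 - \<delta>)" using base d bp by (intro powr_mono2) auto
    finally have le: "2 * real W + 1 \<le> real n powr (1 - \<delta>)" .
    have "real n = real n powr \<delta> * real n powr (1 - \<delta>)"
      using npos by (simp add: powr_add[symmetric])
    hence "2 * (real W * real n powr \<delta>) \<le> real n"
    proof -
      have "2 * real W * real n powr \<delta> \<le> real n powr (1 - \<delta>) * real n powr \<delta>"
        using le by (intro mult_right_mono) auto
      moreover have "2 * real W * real n powr \<delta> = 2 * (real W * real n powr \<delta>)" by simp
      moreover have "real n powr (1 - \<delta>) * real n powr \<delta> = real n"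
        using \<open>real n = real n powr \<delta> * real n powr (1 - \<delta>)\<close> by (simp add: mult.commute)
      ultimately show ?thesis by linarith
    qed
    thus ?thesis by simp
  qed
  thus ?thesis by blast
qed

theorem mainTheorem8:
  fixes h :: nat and b :: "nat \<Rightarrow> nat" and f :: "real \<Rightarrow> real"
    and \<theta> c :: real and M :: "'a measure" and A :: "'a \<Rightarrow> nat set"
  assumes h: "h \<ge> 2"
    and b_pos: "\<forall>j<h. b j > 0"
    and b_gcd: "Gcd (b ` {..<h}) = 1"
    and f_pos: "\<forall>x\<ge>1. f x > 0"
    and f_locint: "\<forall>x\<ge>1. f integrable_on {1..x}"
    and f_bigO: "f \<in> O(\<lambda>x. x)"
    and f_int: "(\<lambda>x. integral {1..x} (\<lambda>t. f t / t)) \<in> \<Theta>(f)"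
    and theta_pos: "\<theta> > 0"
    and theta_cond: "\<exists>x0>0. \<exists>K0>0. \<forall>x y. 1 \<le> x \<longrightarrow> x0 \<le> x \<longrightarrow> x < y \<longrightarrow>
                        f x / x powr \<theta> \<le> K0 * (f y / y powr \<theta>)"
    and c: "c \<ge> 1"
    and M: "prob_space M"
    and A_zero: "\<forall>\<omega>\<in>space M. 0 \<in> A \<omega>"
    and A_indep: "prob_space.indep_events M (\<lambda>n. {\<omega> \<in> space M. n \<in> A \<omega>}) {1..}"
    and A_prob: "\<forall>n\<ge>1. measure M {\<omega> \<in> space M. n \<in> A \<omega>} = min (c * f (real n) / real n) 1"
  shows "\<forall>\<delta>. 0 < \<delta> \<and> \<delta> < 1 \<longrightarrow>
           (\<exists>K. \<forall>\<^sub>F n in sequentially.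
              prob_space.expectation M (\<lambda>\<omega>. real (r_small b h \<delta> (A \<omega>) n))
                \<le> K * c ^ h * real n powr (- (1 - \<delta>) * \<theta>) * f (real n) ^ h / real n)"
proof (intro allI impI)
  fix \<delta> :: real assume "0 < \<delta> \<and> \<delta> < 1"
  hence d: "0 < \<delta>" "\<delta> < 1" by auto
  define q where "q v = min (c * f (real v) / real v) 1" for v :: nat
  define W where "W = sum b {..<h}"
  define F where "F = FF f \<theta>"
  have th0: "0 \<le> \<theta>" using theta_pos by simp
  have q0: "\<forall>x. 0 \<le> q x"
  proof
    fix x show "0 \<le> q x"
    proof (cases "x = 0")
      case False
      hence "f (real x) > 0" using f_pos by auto
      thus ?thesis unfolding q_def using c by auto
    qed (simp add: q_def)
  qed
  interpret anl q F c W
  proof (unfold_locales)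
    show "1 \<le> c" using c .
    show "\<forall>x. 0 \<le> q x" using q0 .
    show "F u \<le> F m" if "u \<le> m" for u m unfolding F_def using FF_mono[OF th0 that] .
    show "1 \<le> F m" for m unfolding F_def using FF_1[OF th0] .
    show "q v \<le> c * F v / real v" if v: "1 \<le> v" for v
    proof -
      have "q v \<le> c * f (real v) / real v" unfolding q_def by simp
      also have "\<dots> \<le> c * F v / real v" unfolding F_def
        using f_le_FF[OF v, of f \<theta>] c by (intro divide_right_mono mult_left_mono) auto
      finally show ?thesis .
    qed
    show "\<exists>C. \<forall>m. (\<Sum>u\<le>m. F u ^ k / (real u + 1)) \<le> C * F m ^ k" if "1 \<le> k" for k
      unfolding F_def using FF_sum[OF theta_pos that] .
  qed
  have Aprob': "\<forall>n\<ge>1. measure M {\<omega> \<in> space M. n \<in> A \<omega>} = q n" using A_prob q_def by simp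
  obtain C D where CD: "0 \<le> C" "0 \<le> D"
    "\<forall>I b m. finite I \<and> card I = h - 1 \<and> (\<forall>i\<in>I. 0 < b i) \<and> sum b I \<le> W \<longrightarrow> TT q I b m \<le> C * c^(h - 1) * G (h - 1) m"
    "\<forall>I b j v m. finite I \<and> card I = Suc (h - 1) \<and> j \<in> I \<and> (\<forall>i\<in>I. 0 < b i) \<and> sum b I \<le> W \<longrightarrow>
        TF q j v I b m \<le> D * pt v * c^(h - 1) * SG (h - 1) v m"
    using main_ind[of "h - 1"] by (elim exE conjE) (rule that, assumption+)
  obtain Cs where Cs: "Cs \<ge> 0" "\<forall>m. (\<Sum>v\<le>m. pt v) \<le> Cs * c * F m" using L1 by blast
  obtain CF n1 where CF: "\<forall>n\<ge>n1. F n \<le> CF * f (real n)"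
    using FF_le_f[OF theta_pos f_pos theta_cond] unfolding F_def by blast
  obtain N1 where N1: "\<forall>n\<ge>N1. real W * real n powr \<delta> \<le> real n / 2" using eventually_Wpow[OF d] by blast
  define K where "K = real h * D * 2 * real W * Cs * 2 powr \<theta> * CF ^ h"
  show "\<exists>K. \<forall>\<^sub>F n in sequentially.
              prob_space.expectation M (\<lambda>\<omega>. real (r_small b h \<delta> (A \<omega>) n))
                \<le> K * c ^ h * real n powr (- (1 - \<delta>) * \<theta>) * f (real n) ^ h / real n"
  proof (intro exI[of _ K] eventually_sequentiallyI)
    fix n assume n: "n \<ge> max (max n1 1) N1"
    have n1: "real n \<ge> 1" using n by simp
    have npos: "real n > 0" using n1 by simp
    have Wn: "real W * real n powr \<delta> \<le> real n / 2" using N1 n by simp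
    have Fn: "F n \<le> CF * f (real n)" using CF n by simp
    define V where "V = {v. v \<le> n \<and> real v < real n powr \<delta>}"
    define P where "P = real n powr (- (1 - \<delta>) * \<theta>)"
    have P0: "0 \<le> P" unfolding P_def by simp
    have h1: "h - 1 \<noteq> 0" "Suc (h - 1) = h" using h by auto
    have c0: "0 \<le> c" using c by simp
    have SGb: "SG (h - 1) v n \<le> real W * (2 * F n ^ (h - 1) / real n)" if v: "v \<in> V" for v
    proof -
      have "SG (h - 1) v n \<le> (\<Sum>w\<in>{1..W}. 2 * F n ^ (h - 1) / real n)"
        unfolding SG_def
      proof (intro sum_mono)
        fix w assume w: "w \<in> {1..W}"
        show "(if w * v \<le> n then G (h - 1) (n - w * v) else 0) \<le> 2 * F n ^ (h - 1) / real n"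
        proof (cases "w * v \<le> n")
          case False thus ?thesis using F1[of n] npos by simp
        next
          case True
          have "real w * real v \<le> real W * real n powr \<delta>"
            using w v unfolding V_def by (intro mult_mono) auto
          hence wv: "real (w * v) \<le> real n / 2" using Wn by simp
          have m': "real n / 2 \<le> real (n - w * v) + 1" using wv True by (simp add: of_nat_diff)
          have "F (n - w * v) ^ (h - 1) \<le> F n ^ (h - 1)"
            using F1[of "n - w * v"] Fmono[of "n - w * v" n] by (intro power_mono) auto
          hence "F (n - w * v) ^ (h - 1) / (real (n - w * v) + 1) \<le> F n ^ (h - 1) / (real n / 2)"
            using m' npos F1[of n] by (intro frac_le) auto
          moreover have "F n ^ (h - 1) / (real n / 2) = 2 * F n ^ (h - 1) / real n" by simp
          ultimately show ?thesis using True h1 by (simp only: G_def if_False if_True)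
        qed
      qed
      also have "\<dots> = real W * (2 * F n ^ (h - 1) / real n)" by simp
      finally show ?thesis .
    qed
    define N where "N = nat \<lfloor>real n powr \<delta>\<rfloor>"
    have npd1: "1 \<le> real n powr \<delta>" using n1 d by (intro ge_one_powr_ge_zero) auto
    have npdn: "real n powr \<delta> \<le> real n"
    proof -
      have "real n powr \<delta> \<le> real n powr 1" using n1 d by (intro powr_mono) auto
      thus ?thesis using npos by simp
    qed
    have VN: "V \<subseteq> {..N}" unfolding V_def N_def by (auto simp: le_nat_iff le_floor_iff)
    have Nn: "N \<le> n" unfolding N_def using npdn by (simp add: nat_le_iff floor_le_iff)
    have realN: "real N \<le> real n powr \<delta>" unfolding N_def using npd1 by linarith
    have FN: "F N \<le> 2 powr \<theta> * P * F n"
    proof -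
      have "F N = (real N + 1) powr \<theta> * HH f \<theta> N" unfolding F_def FF_def ..
      also have "\<dots> \<le> (2 * real n powr \<delta>) powr \<theta> * HH f \<theta> n"
        using realN npd1 th0 HH_mono[OF Nn, of f \<theta>] HH_1[of f \<theta> N]
        by (intro mult_mono powr_mono2) auto
      also have "(2 * real n powr \<delta>) powr \<theta> = 2 powr \<theta> * (P * real n powr \<theta>)"
      proof -
        have "(2 * real n powr \<delta>) powr \<theta> = 2 powr \<theta> * real n powr (\<delta> * \<theta>)"
          by (simp add: powr_mult powr_powr)
        also have "real n powr (\<delta> * \<theta>) = P * real n powr \<theta>"
          unfolding P_def by (simp add: powr_add[symmetric] algebra_simps)
        finally show ?thesis .
      qed
      also have "2 powr \<theta> * (P * real n powr \<theta>) * HH f \<theta> n = 2 powr \<theta> * P * (real n powr \<theta> * HH f \<theta> n)"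
        by (simp add: algebra_simps)
      also have "real n powr \<theta> * HH f \<theta> n \<le> F n"
        unfolding F_def FF_def using th0 HH_1[of f \<theta> n] by (intro mult_right_mono powr_mono2) auto
      finally show ?thesis using P0 by (simp add: mult_left_mono)
    qed
    have ptV: "(\<Sum>v\<in>V. pt v) \<le> Cs * c * (2 powr \<theta> * P * F n)"
    proof -
      have "(\<Sum>v\<in>V. pt v) \<le> (\<Sum>v\<le>N. pt v)" by (rule sum_mono2) (use VN pt_nonneg in auto)
      also have "\<dots> \<le> Cs * c * F N" using Cs by blast
      also have "\<dots> \<le> Cs * c * (2 powr \<theta> * P * F n)" using FN Cs c by (intro mult_left_mono) auto
      finally show ?thesis .
    qed
    define B where "B = real W * (2 * F n ^ (h - 1) / real n)"
    have B0: "0 \<le> B" unfolding B_def using F1[of n] npos by simp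
    have "prob_space.expectation M (\<lambda>\<omega>. real (r_small b h \<delta> (A \<omega>) n))
        = (\<Sum>k\<in>{k \<in> {..<h} \<rightarrow>\<^sub>E UNIV. (\<Sum>j<h. b j * k j) = n \<and> (\<exists>j<h. real (k j) < real n powr \<delta>)}. Pq q (k ` {..<h}))"
      by (rule expect_part[OF M A_zero A_indep Aprob' b_pos])
    also have "\<dots> \<le> (\<Sum>j<h. \<Sum>v\<in>V. TF q j v {..<h} b n)"
      unfolding V_def by (rule small_split[OF b_pos q0])
    also have "\<dots> \<le> (\<Sum>j<h. \<Sum>v\<in>V. D * pt v * c^(h - 1) * B)"
    proof (intro sum_mono)
      fix j v assume j: "j \<in> {..<h}" and v: "v \<in> V"
      have "TF q j v {..<h} b n \<le> D * pt v * c^(h - 1) * SG (h - 1) v n"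
        by (rule CD(4)[rule_format]) (use j b_pos h1 in \<open>auto simp: W_def\<close>)
      also have "\<dots> \<le> D * pt v * c^(h - 1) * B"
        unfolding B_def using SGb[OF v] CD(2) pt_nonneg[of v] c0
        by (intro mult_left_mono) auto
      finally show "TF q j v {..<h} b n \<le> D * pt v * c^(h - 1) * B" .
    qed
    also have "\<dots> = real h * (D * c^(h - 1) * B) * (\<Sum>v\<in>V. pt v)"
      by (simp add: sum_distrib_left sum_distrib_right algebra_simps)
    also have "\<dots> \<le> real h * (D * c^(h - 1) * B) * (Cs * c * (2 powr \<theta> * P * F n))"
      using ptV CD(2) B0 c0 by (intro mult_left_mono) auto
    also have "\<dots> = (real h * D * 2 * real W * Cs * 2 powr \<theta>) * (c^(h - 1) * c) * P * (F n ^ (h - 1) * F n) / real n"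
      unfolding B_def by (simp add: algebra_simps)
    also have "c^(h - 1) * c = c ^ h" using h1 by (metis power_Suc2)
    also have "F n ^ (h - 1) * F n = F n ^ h" using h1 by (metis power_Suc2)
    also have "F n ^ h \<le> CF ^ h * f (real n) ^ h"
    proof -
      have "F n ^ h \<le> (CF * f (real n)) ^ h" using Fn F1[of n] by (intro power_mono) auto
      thus ?thesis by (simp add: power_mult_distrib)
    qed
    hence "(real h * D * 2 * real W * Cs * 2 powr \<theta>) * c ^ h * P * F n ^ h / real n
        \<le> (real h * D * 2 * real W * Cs * 2 powr \<theta>) * c ^ h * P * (CF ^ h * f (real n) ^ h) / real n"
      using CD(2) Cs(1) c0 P0 npos by (intro divide_right_mono mult_left_mono) auto
    also have "\<dots> = K * c ^ h * real n powr (- (1 - \<delta>) * \<theta>) * f (real n) ^ h / real n"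
      unfolding K_def P_def by (simp add: algebra_simps)
    finally show "prob_space.expectation M (\<lambda>\<omega>. real (r_small b h \<delta> (A \<omega>) n))
                \<le> K * c ^ h * real n powr (- (1 - \<delta>) * \<theta>) * f (real n) ^ h / real n" .
  qed
qed


end
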